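(* Let $\mathfrak p=(p_1,p_2,p_3,p_4)$ be a quadruple of distinct points in the Heisenberg group $\mathfrak H$, and let $d_K$ be the Korányi–Cygan metric. Then $$d_K(p_2,p_3)\,d_K(p_1,p_4)\le d_K(p_2,p_4)\,d_K(p_1,p_3)+d_K(p_1,p_2)\,d_K(p_3,p_4),$$ $$d_K(p_1,p_3)\,d_K(p_2,p_4)\le d_K(p_1,p_2)\,d_K(p_3,p_4)+d_K(p_2,p_3)\,d_K(p_1,p_4),$$ $$d_K(p_1,p_2)\,d_K(p_3,p_4)\le d_K(p_1,p_3)\,d_K(p_2,p_4)+d_K(p_2,p_3)\,d_K(p_1,p_4).$$ Moreover: (1) $d_K(p_2,p_3)d_K(p_1,p_4)=d_K(p_2,p_4)d_K(p_1,p_3)+d_K(p_1,p_2)d_K(p_3,p_4)$ if and only if all four points lie on an $\mathbb R$-circle and $p_1$ and $p_4$ separate $p_2$ and $p_3$; (2) $d_K(p_1,p_3)d_K(p_2,p_4)=d_K(p_1,p_2)d_K(p_3,p_4)+d_K(p_2,p_3)d_K(p_1,p_4)$ if and only if all four points lie on an $\mathbb R$-circle and $p_1$ and $p_3$ separate $p_2$ and $p_4$; (3) $d_K(p_1,p_2)d_K(p_3,p_4)=d_K(p_1,p_3)d_K(p_2,p_4)+d_K(p_2,p_3)d_K(p_1,p_4)$ if and only if all four points lie on an $\mathbb R$-circle and $p_1$ and $p_2$ separate $p_3$ and $p_4$.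
   Context: The Heisenberg group $\mathfrak H$ is $\mathbb C\times\mathbb R$ with group law $(z,t)*(w,s)=(z+w,\,t+s+2\,\mathrm{Im}(\overline{w}z))$. The Korányi gauge is $|(z,t)|=\big||z|^2-it\big|^{1/2}$ and the Korányi–Cygan metric is $d_K(p,q)=|p^{-1}*q|$. Let $\mathbb C^{2,1}$ be $\mathbb C^3$ with Hermitian form $\langle\mathbf z,\mathbf w\rangle=z_1\overline{w_3}+z_2\overline{w_2}+z_3\overline{w_1}$, $V_0=\{\mathbf z\neq0:\langle\mathbf z,\mathbf z\rangle=0\}$, $V_-=\{\mathbf z:\langle\mathbf z,\mathbf z\rangle<0\}$, $\mathbb P$ the projectivization to $\mathbb CP^2$, $\mathbf H^2_{\mathbb C}=\mathbb P(V_-)$ and $\partial\mathbf H^2_{\mathbb C}=\mathbb P(V_0)$. The map $(z,t)\mapsto\mathbb P\big([-|z|^2+it,\ \sqrt2 z,\ 1]^T\big)$ identifies $\mathfrak H$ with $\partial\mathbf H^2_{\mathbb C}$ minus the point $\infty=\mathbb P([1,0,0]^T)$. An $\mathbb R$-circle in $\partial\mathbf H^2_{\mathbb C}$ is the boundary of a Lagrangian plane (an isometric image of $\mathbf H^2_{\mathbb R}$ in $\mathbf H^2_{\mathbb C}$), equivalently an image under $\mathrm{PU}(2,1)$ (the projectivized group of linear maps preserving $\langle\cdot,\cdot\rangle$) of $\mathbb P(V_0\cap\mathbb R^3)$; "the points lie on an $\mathbb R$-circle" means their images in $\partial\mathbf H^2_{\mathbb C}$ do (the $\mathbb R$-circle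 may pass through $\infty$). An $\mathbb R$-circle is a topological circle; "$p_a$ and $p_b$ separate $p_c$ and $p_d$" means $p_c,p_d$ lie in different components of the circle (including $\infty$ if it lies on it) with $p_a,p_b$ removed. *)

theory Defs
  imports "HOL-Analysis.Analysis"
begin

type_synonym heis = "complex \<times> real"

definition heis_mult :: "heis \<Rightarrow> heis \<Rightarrow> heis" where
  "heis_mult p q = (fst p + fst q, snd p + snd q + 2 * Im (cnj (fst q) * fst p))"

definition heis_inv :: "heis \<Rightarrow> heis" where
  "heis_inv p = (- fst p, - snd p)"

definition koranyi_gauge :: "heis \<Rightarrow> real" where
  "koranyi_gauge p = sqrt (cmod (complex_of_real ((cmod (fst p))\<^sup>2) - \<i> * complex_of_real (snd p)))"

definition dK :: "heis \<Rightarrow> heis \<Rightarrow> real" where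
  "dK p q = koranyi_gauge (heis_mult (heis_inv p) q)"

definition hform :: "complex^3 \<Rightarrow> complex^3 \<Rightarrow> complex" where
  "hform z w = z$1 * cnj (w$3) + z$2 * cnj (w$2) + z$3 * cnj (w$1)"

definition V0 :: "(complex^3) set" where
  "V0 = {z. z \<noteq> 0 \<and> hform z z = 0}"

text \<open>Linear maps preserving the Hermitian form (the group U(2,1));
  PU(2,1) acts on projective points through these.\<close>
definition unitary21 :: "complex^3^3 \<Rightarrow> bool" where
  "unitary21 A \<longleftrightarrow> (\<forall>z w. hform (A *v z) (A *v w) = hform z w)"

definition real_vecs :: "(complex^3) set" where
  "real_vecs = range (\<lambda>r::real^3. \<chi> i. complex_of_real (r$i))"

text \<open>Concrete model of the boundary P(V_0): the map sending a null vector to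
  the point of the unit sphere S^3 in C x C obtained from the ball model
  (coordinates u=(z1+z3)/sqrt2, v=(z1-z3)/sqrt2, w=z2, in which the form is
  |u|^2+|w|^2-|v|^2).  It is invariant under scaling and induces a
  homeomorphism of P(V_0) (with its topology as a subspace of CP^2) onto S^3;
  the topology of the boundary is taken from this model.\<close>
definition bdry :: "complex^3 \<Rightarrow> complex \<times> complex" where
  "bdry z = ((z$1 + z$3) / (z$1 - z$3), complex_of_real (sqrt 2) * z$2 / (z$1 - z$3))"

definition heis_lift :: "heis \<Rightarrow> complex^3" where
  "heis_lift p = vector [- complex_of_real ((cmod (fst p))\<^sup>2) + \<i> * complex_of_real (snd p),
                         complex_of_real (sqrt 2) * fst p, 1]"

definition heis_bd :: "heis \<Rightarrow> complex \<times> complex" where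
  "heis_bd p = bdry (heis_lift p)"

definition is_Rcircle :: "(complex \<times> complex) set \<Rightarrow> bool" where
  "is_Rcircle R \<longleftrightarrow> (\<exists>A. unitary21 A \<and> R = (\<lambda>x. bdry (A *v x)) ` (V0 \<inter> real_vecs))"

definition separates :: "(complex \<times> complex) set \<Rightarrow> heis \<Rightarrow> heis \<Rightarrow> heis \<Rightarrow> heis \<Rightarrow> bool" where
  "separates R a b c d \<longleftrightarrow>
     heis_bd c \<in> R - {heis_bd a, heis_bd b} \<and> heis_bd d \<in> R - {heis_bd a, heis_bd b} \<and>
     heis_bd d \<notin> connected_component_set (R - {heis_bd a, heis_bd b}) (heis_bd c)"

definition on_Rcircle_sep :: "heis \<Rightarrow> heis \<Rightarrow> heis \<Rightarrow> heis \<Rightarrow> bool" where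
  "on_Rcircle_sep a b c d \<longleftrightarrow>
     (\<exists>R. is_Rcircle R \<and> heis_bd a \<in> R \<and> heis_bd b \<in> R \<and> heis_bd c \<in> R \<and> heis_bd d \<in> R
          \<and> separates R a b c d)"

end

theory Submission
  imports Defs
begin


definition hA :: "heis \<Rightarrow> complex" where
  "hA p = complex_of_real ((cmod (fst p))\<^sup>2) - \<i> * complex_of_real (snd p)"

lemma gauge_hA: "koranyi_gauge p = sqrt (cmod (hA p))"
  by (simp add: koranyi_gauge_def hA_def)

lemma hA_mult: "hA (heis_mult p q) = hA p + hA q + 2 * fst q * cnj (fst p)"
  apply (simp add: hA_def heis_mult_def complex_eq_iff cmod_power2)
  apply (simp add: algebra_simps power2_eq_square)
  done

lemma hform_lift: "hform (heis_lift p) (heis_lift q) = - cnj (hA (heis_mult (heis_inv p) q))"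
  apply (simp add: hA_def heis_mult_def heis_inv_def hform_def heis_lift_def complex_eq_iff cmod_power2)
  apply (simp add: algebra_simps power2_eq_square)
  done

lemma dK_sq: "(dK p q)\<^sup>2 = cmod (hform (heis_lift p) (heis_lift q))"
  by (simp add: dK_def gauge_hA hform_lift)




lemma heis_cancel1: "heis_mult (heis_inv x) (heis_mult x y) = y"
  by (simp add: heis_mult_def heis_inv_def prod_eq_iff algebra_simps)

lemma heis_cancel2: "heis_mult x (heis_mult (heis_inv x) y) = y"
  by (simp add: heis_mult_def heis_inv_def prod_eq_iff algebra_simps)

lemma heis_chain: "heis_mult (heis_mult (heis_inv x) y) (heis_mult (heis_inv y) z) = heis_mult (heis_inv x) z"
  by (simp add: heis_mult_def heis_inv_def prod_eq_iff algebra_simps)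

lemma heis_assoc: "heis_mult (heis_mult x y) z = heis_mult x (heis_mult y z)"
  by (simp add: heis_mult_def heis_inv_def prod_eq_iff algebra_simps)

lemma Re_hA[simp]: "Re (hA p) = (cmod (fst p))\<^sup>2" and Im_hA[simp]: "Im (hA p) = - snd p"
  by (simp_all add: hA_def)

lemma cmod_hA_sq: "(cmod (hA p))\<^sup>2 = (cmod (fst p))^4 + (snd p)\<^sup>2"
proof -
  have "(cmod (hA p))\<^sup>2 = (Re (hA p))\<^sup>2 + (Im (hA p))\<^sup>2" by (rule cmod_power2)
  also have "\<dots> = (cmod (fst p))^4 + (snd p)\<^sup>2" by (simp flip: power_mult)
  finally show ?thesis .
qed

lemma fst_le_hA: "(cmod (fst p))\<^sup>2 \<le> cmod (hA p)"
proof -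
  have "((cmod (fst p))\<^sup>2)\<^sup>2 \<le> (cmod (hA p))\<^sup>2" using cmod_hA_sq[of p]
    by (simp add: power2_eq_square[symmetric] power_mult[symmetric])
  then show ?thesis by (rule power2_le_imp_le) simp
qed




lemma fst_le_sqrt: "cmod (fst p) \<le> sqrt (cmod (hA p))"
  using fst_le_hA[of p] real_le_rsqrt by blast

lemma hA_mult_le: "cmod (hA (heis_mult p q)) \<le> cmod (hA p) + cmod (hA q) + 2 * cmod (fst p) * cmod (fst q)"
proof -
  have "cmod (hA (heis_mult p q)) \<le> cmod (hA p + hA q) + cmod (2 * fst q * cnj (fst p))"
    unfolding hA_mult by (rule norm_triangle_ineq)
  also have "\<dots> \<le> cmod (hA p) + cmod (hA q) + cmod (2 * fst q * cnj (fst p))"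
    using norm_triangle_ineq by simp
  also have "cmod (2 * fst q * cnj (fst p)) = 2 * cmod (fst p) * cmod (fst q)"
    by (simp add: norm_mult)
  finally show ?thesis .
qed

lemma gauge_tri: "koranyi_gauge (heis_mult p q) \<le> koranyi_gauge p + koranyi_gauge q"
proof -
  define a where "a = cmod (hA p)"
  define b where "b = cmod (hA q)"
  have a0: "a \<ge> 0" "b \<ge> 0" by (simp_all add: a_def b_def)
  have "cmod (hA (heis_mult p q)) \<le> a + b + 2 * sqrt a * sqrt b"
    using hA_mult_le[of p q] fst_le_sqrt[of p] fst_le_sqrt[of q]
      mult_mono[of "cmod (fst p)" "sqrt a" "cmod (fst q)" "sqrt b"]
    unfolding a_def b_def by auto
  also have "\<dots> = (sqrt a + sqrt b)\<^sup>2" using a0 by (simp add: power2_eq_square algebra_simps)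
  finally have "sqrt (cmod (hA (heis_mult p q))) \<le> sqrt a + sqrt b"
    using a0 by (simp add: real_le_lsqrt real_sqrt_le_iff real_le_rsqrt)
  then show ?thesis by (simp add: gauge_hA a_def b_def)
qed

lemma cmod_add_eq:
  fixes X :: real and Y :: complex
  assumes "X > 0" "cmod (complex_of_real X + Y) = X + cmod Y"
  shows "Im Y = 0 \<and> Re Y \<ge> 0"
proof -
  have "(cmod (complex_of_real X + Y))\<^sup>2 = (X + cmod Y)\<^sup>2" using assms by simp
  moreover have "(cmod (complex_of_real X + Y))\<^sup>2 = (X + Re Y)\<^sup>2 + (Im Y)\<^sup>2"
    by (simp add: cmod_power2)
  moreover have "(X + cmod Y)\<^sup>2 = X\<^sup>2 + 2 * X * cmod Y + (Re Y)\<^sup>2 + (Im Y)\<^sup>2"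
    using cmod_power2[of Y] by (simp add: power2_eq_square algebra_simps)
  ultimately have "(X + Re Y)\<^sup>2 + (Im Y)\<^sup>2 = X\<^sup>2 + 2 * X * cmod Y + (Re Y)\<^sup>2 + (Im Y)\<^sup>2"
    by simp
  hence "Re Y = cmod Y" using assms(1) by (simp add: power2_eq_square algebra_simps)
  hence "(Re Y)\<^sup>2 = (Re Y)\<^sup>2 + (Im Y)\<^sup>2" by (metis cmod_power2)
  moreover have "Re Y \<ge> 0" using \<open>Re Y = cmod Y\<close> by simp
  ultimately show ?thesis by simp
qed

lemma gauge_tri_eq:
  assumes gp: "koranyi_gauge p > 0" and gq: "koranyi_gauge q > 0"
    and eq: "koranyi_gauge (heis_mult p q) = koranyi_gauge p + koranyi_gauge q"
  shows "snd p = 0 \<and> snd q = 0 \<and> fst p \<noteq> 0 \<and> (\<exists>l>0. fst q = complex_of_real l * fst p)"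
proof -
  define a where "a = cmod (hA p)"
  define b where "b = cmod (hA q)"
  have a0: "a \<ge> 0" "b \<ge> 0" by (simp_all add: a_def b_def)
  have sa: "sqrt a > 0" "sqrt b > 0" using gp gq by (simp_all add: gauge_hA a_def b_def)
  have zs: "cmod (fst p) \<le> sqrt a" "cmod (fst q) \<le> sqrt b"
    using fst_le_sqrt[of p] fst_le_sqrt[of q] by (simp_all add: a_def b_def)
  have "cmod (hA (heis_mult p q)) = (sqrt a + sqrt b)\<^sup>2"
  proof -
    have "cmod (hA (heis_mult p q)) = (sqrt (cmod (hA (heis_mult p q))))\<^sup>2" by simp
    thus ?thesis using eq unfolding gauge_hA a_def b_def by simp
  qed
  also have "\<dots> = a + b + 2 * sqrt a * sqrt b" using a0 by (simp add: power2_eq_square algebra_simps)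
  finally have E: "cmod (hA (heis_mult p q)) = a + b + 2 * sqrt a * sqrt b" .
  have "a + b + 2 * sqrt a * sqrt b \<le> a + b + 2 * cmod (fst p) * cmod (fst q)"
    using hA_mult_le[of p q] E unfolding a_def b_def by simp
  hence m: "sqrt a * sqrt b \<le> cmod (fst p) * cmod (fst q)" by simp
  have za: "cmod (fst p) = sqrt a"
  proof (rule ccontr)
    assume "cmod (fst p) \<noteq> sqrt a"
    hence "cmod (fst p) < sqrt a" using zs by simp
    have "cmod (fst p) * cmod (fst q) \<le> cmod (fst p) * sqrt b"
      using zs by (simp add: mult_left_mono)
    also have "\<dots> < sqrt a * sqrt b" using \<open>cmod (fst p) < sqrt a\<close> sa by (simp add: mult_strict_right_mono)
    finally have "cmod (fst p) * cmod (fst q) < sqrt a * sqrt b" .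
    thus False using m by simp
  qed
  have zb: "cmod (fst q) = sqrt b"
  proof (rule ccontr)
    assume "cmod (fst q) \<noteq> sqrt b"
    hence "cmod (fst q) < sqrt b" using zs by simp
    hence "cmod (fst p) * cmod (fst q) < sqrt a * sqrt b"
      using sa za by (simp add: mult_strict_left_mono)
    thus False using m by simp
  qed
  have t0: "snd p = 0"
  proof -
    have "(cmod (fst p))\<^sup>2 = a" using za a0 by simp
    hence "a\<^sup>2 = (cmod (fst p))^4" by (auto simp: power4_eq_xxxx power2_eq_square)
    thus ?thesis using cmod_hA_sq[of p] unfolding a_def by simp
  qed
  have s0: "snd q = 0"
  proof -
    have "(cmod (fst q))\<^sup>2 = b" using zb a0 by simp
    hence "b\<^sup>2 = (cmod (fst q))^4" by (auto simp: power4_eq_xxxx power2_eq_square)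
    thus ?thesis using cmod_hA_sq[of q] unfolding b_def by simp
  qed
  have hp: "hA p = complex_of_real a" using t0 za a0 by (simp add: complex_eq_iff)
  have hq: "hA q = complex_of_real b" using s0 zb a0 by (simp add: complex_eq_iff)
  have "cmod (complex_of_real (a + b) + 2 * fst q * cnj (fst p)) = (a + b) + cmod (2 * fst q * cnj (fst p))"
    using E za zb hA_mult[of p q] hp hq by (simp add: norm_mult)
  moreover have "a + b > 0" using sa a0 by (metis add_pos_nonneg real_sqrt_gt_0_iff)
  ultimately have Y: "Im (2 * fst q * cnj (fst p)) = 0 \<and> Re (2 * fst q * cnj (fst p)) \<ge> 0"
    using cmod_add_eq by blast
  have z0: "fst p \<noteq> 0" using za sa by auto
  define r where "r = Re (fst q * cnj (fst p))"
  have fr: "fst q * cnj (fst p) = complex_of_real r" using Y by (simp add: complex_eq_iff r_def)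
  have r0: "r \<ge> 0" using Y by (simp add: r_def)
  have "fst q * (cnj (fst p) * fst p) = complex_of_real r * fst p" using fr by (simp add: mult.assoc[symmetric])
  moreover have "cnj (fst p) * fst p = complex_of_real ((cmod (fst p))\<^sup>2)"
    by (metis complex_norm_square mult.commute)
  ultimately have "fst q * complex_of_real ((cmod (fst p))\<^sup>2) = complex_of_real r * fst p"
    by simp
  hence fq: "fst q = complex_of_real (r / (cmod (fst p))\<^sup>2) * fst p" using z0
    by (simp add: field_simps)
  have "fst q \<noteq> 0" using zb sa by auto
  hence "r \<noteq> 0" using fq by auto
  hence "r / (cmod (fst p))\<^sup>2 > 0" using r0 z0 by simp
  thus ?thesis using t0 s0 z0 fq by blast
qed




lemma vec3_eq_iff: "(u::'a^3) = v \<longleftrightarrow> u$1 = v$1 \<and> u$2 = v$2 \<and> u$3 = v$3"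
  by (simp add: vec_eq_iff forall_3)

definition mat3 :: "complex \<Rightarrow> complex \<Rightarrow> complex \<Rightarrow> complex \<Rightarrow> complex \<Rightarrow> complex \<Rightarrow> complex \<Rightarrow> complex \<Rightarrow> complex \<Rightarrow> complex^3^3" where
  "mat3 a b c d e f g h k = vector [vector [a,b,c], vector [d,e,f], vector [g,h,k]]"

lemma mat3_mv: "mat3 a b c d e f g h k *v x = vector [a*x$1 + b*x$2 + c*x$3, d*x$1 + e*x$2 + f*x$3, g*x$1 + h*x$2 + k*x$3]"
  unfolding vec3_eq_iff matrix_vector_mult_def mat3_def by (simp add: sum_3)

definition e1 :: "complex^3" where "e1 = vector [1,0,0]"

definition Tm :: "heis \<Rightarrow> complex^3^3" where
  "Tm g = mat3 1 (- complex_of_real (sqrt 2) * cnj (fst g)) (- complex_of_real ((cmod (fst g))\<^sup>2) + \<i> * complex_of_real (snd g))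
               0 1 (complex_of_real (sqrt 2) * fst g) 0 0 1"

definition Jm :: "complex^3^3" where "Jm = mat3 0 0 1 0 1 0 1 0 0"

definition Rm :: "complex \<Rightarrow> complex^3^3" where "Rm u = mat3 1 0 0 0 u 0 0 0 1"

abbreviation L where "L \<equiv> heis_lift"

lemma L_comp[simp]: "L p $ 1 = - complex_of_real ((cmod (fst p))\<^sup>2) + \<i> * complex_of_real (snd p)"
  "L p $ 2 = complex_of_real (sqrt 2) * fst p" "L p $ 3 = 1"
  by (simp_all add: heis_lift_def)

lemma e1_comp[simp]: "e1 $ 1 = 1" "e1 $ 2 = 0" "e1 $ 3 = 0" by (simp_all add: e1_def)

lemma smult_comp[simp]: "(c *s v) $ i = c * v $ i" by simp

lemma hform_smult1: "hform (c *s u) v = c * hform u v"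
  by (simp add: hform_def distrib_left mult.assoc)
lemma hform_smult2: "hform u (c *s v) = cnj c * hform u v"
  by (simp add: hform_def distrib_left mult.assoc mult.left_commute)
lemma hform_cnj: "cnj (hform u v) = hform v u"
  by (simp add: hform_def mult.commute add.commute add.left_commute)

lemma sqrt2_sq: "complex_of_real (sqrt 2) * complex_of_real (sqrt 2) = 2"
  by (simp flip: of_real_mult)

lemma cmod_sq_add: "(cmod (a + b))\<^sup>2 = (cmod a)\<^sup>2 + (cmod b)\<^sup>2 + 2 * Re (cnj a * b)"
  unfolding cmod_power2 by (simp add: power2_eq_square algebra_simps)

lemma Tm_lift: "Tm g *v L p = L (heis_mult g p)"
proof -
  have a: "- complex_of_real ((cmod (fst p))\<^sup>2) + \<i> * complex_of_real (snd p) +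
      - complex_of_real (sqrt 2) * cnj (fst g) * (complex_of_real (sqrt 2) * fst p) +
      (- complex_of_real ((cmod (fst g))\<^sup>2) + \<i> * complex_of_real (snd g))
    = - complex_of_real ((cmod (fst g + fst p))\<^sup>2) + \<i> * complex_of_real (snd g + snd p + 2 * Im (cnj (fst p) * fst g))"
  proof -
    have "- complex_of_real (sqrt 2) * cnj (fst g) * (complex_of_real (sqrt 2) * fst p) = - (complex_of_real (sqrt 2) * complex_of_real (sqrt 2)) * (cnj (fst g) * fst p)"
      by (simp only: mult_ac minus_mult_left)
    also have "\<dots> = - 2 * (cnj (fst g) * fst p)" by (simp only: sqrt2_sq)
    finally have e: "- complex_of_real (sqrt 2) * cnj (fst g) * (complex_of_real (sqrt 2) * fst p) = - 2 * (cnj (fst g) * fst p)" .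
    show ?thesis unfolding e cmod_sq_add[of "fst g" "fst p"]
      by (simp add: complex_eq_iff algebra_simps)
  qed
  show ?thesis
    unfolding vec3_eq_iff Tm_def mat3_mv heis_mult_def
    using a by (simp add: algebra_simps)
qed




lemma Tm_e1: "Tm g *v e1 = e1"
  by (simp add: Tm_def mat3_mv vec3_eq_iff)
lemma Rm_e1: "Rm u *v e1 = e1"
  by (simp add: Rm_def mat3_mv vec3_eq_iff)
lemma Jm_e1: "Jm *v e1 = L (0,0)"
  by (simp add: Jm_def mat3_mv vec3_eq_iff)
lemma Jm_Jm: "Jm *v (Jm *v v) = v"
  by (simp add: Jm_def mat3_mv vec3_eq_iff)
lemma Rm_lift: "cmod u = 1 \<Longrightarrow> Rm u *v L p = L (u * fst p, snd p)"
  by (simp add: Rm_def mat3_mv vec3_eq_iff norm_mult)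

lemma unitary_upper:
  assumes "b + cnj e = 0" "c + cnj c + e * cnj e = 0"
  shows "unitary21 (mat3 1 b c 0 1 e 0 0 1)"
  unfolding unitary21_def
proof (intro allI)
  fix z w :: "complex^3"
  have b: "b = - cnj e" using assms(1) by (simp add: eq_neg_iff_add_eq_0)
  have "hform (mat3 1 b c 0 1 e 0 0 1 *v z) (mat3 1 b c 0 1 e 0 0 1 *v w) - hform z w
      = z$3 * cnj (w$3) * (c + cnj c + e * cnj e)"
    unfolding hform_def mat3_mv b by (simp add: algebra_simps)
  then show "hform (mat3 1 b c 0 1 e 0 0 1 *v z) (mat3 1 b c 0 1 e 0 0 1 *v w) = hform z w"
    using assms(2) by simp
qed

lemma unitary_Tm: "unitary21 (Tm g)"
  unfolding Tm_def
proof (rule unitary_upper)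
  show "- complex_of_real (sqrt 2) * cnj (fst g) + cnj (complex_of_real (sqrt 2) * fst g) = 0" by simp
  have "complex_of_real (sqrt 2) * fst g * cnj (complex_of_real (sqrt 2) * fst g)
      = (complex_of_real (sqrt 2) * complex_of_real (sqrt 2)) * (fst g * cnj (fst g))"
    by (simp add: mult_ac)
  also have "\<dots> = 2 * complex_of_real ((cmod (fst g))\<^sup>2)"
    by (simp only: sqrt2_sq complex_norm_square)
  finally show "- complex_of_real ((cmod (fst g))\<^sup>2) + \<i> * complex_of_real (snd g) +
    cnj (- complex_of_real ((cmod (fst g))\<^sup>2) + \<i> * complex_of_real (snd g)) +
    complex_of_real (sqrt 2) * fst g * cnj (complex_of_real (sqrt 2) * fst g) = 0"
    by simp
qed

lemma unitary_Jm: "unitary21 Jm"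
  unfolding unitary21_def hform_def Jm_def mat3_mv by (simp add: algebra_simps)

lemma unitary_Rm: assumes u: "cmod u = 1" shows "unitary21 (Rm u)"
  unfolding unitary21_def
proof (intro allI)
  fix z w :: "complex^3"
  have uu: "u * cnj u = 1" using u complex_norm_square[of u] by simp
  have "hform (Rm u *v z) (Rm u *v w) = z$1 * cnj (w$3) + (u * cnj u) * (z$2 * cnj (w$2)) + z$3 * cnj (w$1)"
    by (simp add: hform_def Rm_def mat3_mv mult_ac)
  then show "hform (Rm u *v z) (Rm u *v w) = hform z w" using uu by (simp add: hform_def)
qed

lemma unitary_mult: "unitary21 A \<Longrightarrow> unitary21 B \<Longrightarrow> unitary21 (A ** B)"
  unfolding unitary21_def by (simp add: matrix_vector_mul_assoc[symmetric])

lemma hform_e: "hform z e1 = z$3"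
  by (simp add: hform_def)

lemma hform_zero_all: assumes "\<And>w. hform z w = 0" shows "z = 0"
proof -
  have "hform z (vector [1,0,0]) = 0" "hform z (vector [0,1,0]) = 0" "hform z (vector [0,0,1]) = 0"
    using assms by auto
  thus ?thesis by (simp add: hform_def vec3_eq_iff)
qed

lemma unitary_inj: assumes "unitary21 A" "A *v z = A *v w" shows "z = w"
proof -
  have "A *v (z - w) = 0" using assms(2) by (simp add: matrix_vector_mult_diff_distrib)
  hence "\<And>v. hform (z - w) v = 0" using assms(1) unfolding unitary21_def
    by (metis hform_smult1 matrix_vector_mult_0_right mult_zero_left scalar_mult_eq_scaleR scaleR_zero_left vector_smult_lzero)
  hence "z - w = 0" by (rule hform_zero_all)
  thus ?thesis by simp
qed




lemma hform_self: "hform v v = complex_of_real (2 * Re (v$1 * cnj (v$3)) + (cmod (v$2))\<^sup>2)"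
proof -
  have a: "hform v v = (v$1 * cnj (v$3) + v$3 * cnj (v$1)) + v$2 * cnj (v$2)"
    by (simp add: hform_def algebra_simps)
  have b: "v$1 * cnj (v$3) + v$3 * cnj (v$1) = complex_of_real (2 * Re (v$1 * cnj (v$3)))"
    by (simp add: complex_eq_iff)
  have c: "v$2 * cnj (v$2) = complex_of_real ((cmod (v$2))\<^sup>2)" by (metis complex_norm_square)
  show ?thesis unfolding a b c by simp
qed

lemma lift_V0: "L p \<in> V0"
proof -
  have "L p \<noteq> 0" by (metis L_comp(3) zero_index zero_neq_one)
  moreover have "hform (L p) (L p) = 0"
    unfolding hform_self by (simp add: norm_mult power2_eq_square sqrt2_sq)
  ultimately show ?thesis by (simp add: V0_def)
qed

definition vproj :: "complex^3 \<Rightarrow> heis" where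
  "vproj v = (v$2 / (complex_of_real (sqrt 2) * v$3), Im (v$1 / v$3))"

lemma null_proj:
  assumes "hform v v = 0" "v$3 \<noteq> 0"
  shows "v = v$3 *s L (vproj v)"
proof -
  define r where "r = v$1 / v$3"
  define z where "z = v$2 / (complex_of_real (sqrt 2) * v$3)"
  have v1: "v$1 = r * v$3" using assms(2) by (simp add: r_def)
  have "2 * Re (v$1 * cnj (v$3)) + (cmod (v$2))\<^sup>2 = 0" using assms(1) unfolding hform_self
    by (metis of_real_eq_0_iff)
  moreover have "Re (v$1 * cnj (v$3)) = Re r * (cmod (v$3))\<^sup>2"
    unfolding v1 by (simp add: mult.assoc flip: complex_norm_square)
  moreover have "(cmod (v$2))\<^sup>2 = 2 * (cmod z)\<^sup>2 * (cmod (v$3))\<^sup>2"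
    using assms(2) by (simp add: z_def norm_divide norm_mult power_divide power_mult_distrib)
  ultimately have "2 * (cmod (v$3))\<^sup>2 * (Re r + (cmod z)\<^sup>2) = 0" by (simp add: algebra_simps)
  hence Rr: "Re r = - (cmod z)\<^sup>2" using assms(2) by simp
  have "r = - complex_of_real ((cmod z)\<^sup>2) + \<i> * complex_of_real (Im r)"
    using Rr by (simp add: complex_eq_iff)
  hence c1: "v$1 = v$3 * (- complex_of_real ((cmod z)\<^sup>2) + \<i> * complex_of_real (Im r))"
    using v1 by (simp add: mult.commute)
  have c2: "v$2 = v$3 * (complex_of_real (sqrt 2) * z)" using assms(2) by (simp add: z_def)
  show ?thesis using c1 c2 unfolding vec3_eq_iff vproj_def r_def[symmetric] z_def[symmetric]
    by simp
qed

definition gbd :: "complex \<times> complex \<Rightarrow> complex^3" where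
  "gbd y = vector [fst y + 1, complex_of_real (sqrt 2) * snd y, fst y - 1]"

lemma V0_13: assumes "v \<in> V0" shows "v$1 \<noteq> v$3"
proof
  assume e: "v$1 = v$3"
  have h: "hform v v = 0" "v \<noteq> 0" using assms by (auto simp: V0_def)
  have "2 * Re (v$1 * cnj (v$3)) + (cmod (v$2))\<^sup>2 = 0" using h(1) unfolding hform_self
    by (metis of_real_eq_0_iff)
  hence "2 * (cmod (v$3))\<^sup>2 + (cmod (v$2))\<^sup>2 = 0" unfolding e
    by (simp flip: complex_norm_square)
  moreover have "(cmod (v$3))\<^sup>2 \<ge> 0" "(cmod (v$2))\<^sup>2 \<ge> 0" by simp_all
  ultimately have "(cmod (v$3))\<^sup>2 = 0" "(cmod (v$2))\<^sup>2 = 0" by linarith+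
  hence "v$3 = 0" "v$2 = 0" by simp_all
  hence "v = 0" using e by (simp add: vec3_eq_iff)
  thus False using h(2) by simp
qed

lemma gbd_bdry: assumes "v \<in> V0" shows "gbd (bdry v) = (2 / (v$1 - v$3)) *s v"
proof -
  have d: "v$1 - v$3 \<noteq> 0" using V0_13[OF assms] by simp
  have "complex_of_real (sqrt 2) * (complex_of_real (sqrt 2) * v $ 2 / (v $ 1 - v $ 3)) = 2 * v$2 / (v$1 - v$3)"
    by (simp add: mult.assoc[symmetric] sqrt2_sq)
  thus ?thesis using d unfolding gbd_def bdry_def vec3_eq_iff
    by (simp add: field_simps)
qed

lemma bdry_smult: assumes "c \<noteq> 0" shows "bdry (c *s v) = bdry v"
proof -
  have "(c * v $ 1 + c * v $ 3) / (c * v $ 1 - c * v $ 3) = (v $ 1 + v $ 3) / (v $ 1 - v $ 3)"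
    using assms by (simp add: distrib_left[symmetric] right_diff_distrib[symmetric])
  moreover have "complex_of_real (sqrt 2) * (c * v $ 2) / (c * v $ 1 - c * v $ 3) = complex_of_real (sqrt 2) * v $ 2 / (v $ 1 - v $ 3)"
    using assms by (simp add: right_diff_distrib[symmetric] mult.left_commute)
  ultimately show ?thesis by (simp add: bdry_def)
qed

lemma bdry_inj: assumes "u \<in> V0" "v \<in> V0" "bdry u = bdry v" shows "\<exists>c. c \<noteq> 0 \<and> u = c *s v"
proof -
  have du: "u$1 - u$3 \<noteq> 0" and dv: "v$1 - v$3 \<noteq> 0" using V0_13 assms by auto
  have "(2 / (u$1 - u$3)) *s u = (2 / (v$1 - v$3)) *s v" using gbd_bdry assms by metis
  note E = this
  have k: "((u$1-u$3)/2) * (2 / (u$1 - u$3)) = 1" using du by simp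
  have "u = (((u$1-u$3)/2) * (2 / (u$1 - u$3))) *s u" by (simp only: k vector_smult_lid)
  also have "\<dots> = ((u$1-u$3)/2) *s ((2 / (u$1 - u$3)) *s u)" by (simp only: vector_smult_assoc)
  also have "\<dots> = ((u$1-u$3)/2) *s ((2/(v$1-v$3)) *s v)" using E by simp
  also have "\<dots> = ((u$1-u$3)/(v$1-v$3)) *s v"
  proof -
    have k2: "((u$1-u$3)/2) * (2/(v$1-v$3)) = (u$1-u$3)/(v$1-v$3)" using dv by (simp add: field_simps)
    show ?thesis by (simp only: vector_smult_assoc k2)
  qed
  finally have "u = ((u$1 - u$3) / (v$1 - v$3)) *s v" .
  moreover have "(u$1 - u$3) / (v$1 - v$3) \<noteq> 0" using du dv by simp
  ultimately show ?thesis by blast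
qed

lemma unitary_V0: assumes "unitary21 A" "v \<in> V0" shows "A *v v \<in> V0"
proof -
  have "A *v v \<noteq> 0" using assms unitary_inj[OF assms(1), of v 0] by (auto simp: V0_def)
  moreover have "hform (A *v v) (A *v v) = 0" using assms by (simp add: unitary21_def V0_def)
  ultimately show ?thesis by (simp add: V0_def)
qed

lemma lift_inj: assumes "L p = c *s L q" shows "p = q"
proof -
  have c: "c = 1" using assms by (metis L_comp(3) smult_comp mult_1_right)
  hence "L p = L q" using assms by simp
  hence e1: "L p $ 1 = L q $ 1" and e2: "L p $ 2 = L q $ 2" by simp_all
  have "complex_of_real (sqrt 2) * fst p = complex_of_real (sqrt 2) * fst q"
    using e2 unfolding L_comp .
  hence f: "fst p = fst q"
    by (metis mult_cancel_left of_real_eq_0_iff real_sqrt_eq_zero_cancel_iff zero_neq_numeral)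
  from e1 f have "Im (L p $ 1) = Im (L q $ 1)" by simp
  hence "snd p = snd q" by simp
  thus ?thesis using f by (simp add: prod_eq_iff)
qed




lemma real_vecs_iff: "x \<in> real_vecs \<longleftrightarrow> Im (x$1) = 0 \<and> Im (x$2) = 0 \<and> Im (x$3) = 0"
proof
  assume "x \<in> real_vecs"
  then obtain r :: "real^3" where "x = (\<chi> i. complex_of_real (r$i))" by (auto simp: real_vecs_def)
  thus "Im (x$1) = 0 \<and> Im (x$2) = 0 \<and> Im (x$3) = 0" by simp
next
  assume h: "Im (x$1) = 0 \<and> Im (x$2) = 0 \<and> Im (x$3) = 0"
  have "x = (\<lambda>r::real^3. \<chi> i. complex_of_real (r$i)) (\<chi> i. Re (x$i))"
    using h by (simp add: vec3_eq_iff complex_eq_iff)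
  thus "x \<in> real_vecs" unfolding real_vecs_def by blast
qed

definition Lr :: "real \<Rightarrow> complex^3" where "Lr s = L (complex_of_real s, 0)"

lemma Lr_comp[simp]: "Lr s $ 1 = - complex_of_real (s\<^sup>2)" "Lr s $ 2 = complex_of_real (sqrt 2 * s)" "Lr s $ 3 = 1"
  by (simp_all add: Lr_def)

lemma Lr_V0R: "Lr s \<in> V0 \<inter> real_vecs"
  using lift_V0 by (simp add: Lr_def real_vecs_iff power2_eq_square)

lemma e1_V0R: "e1 \<in> V0 \<inter> real_vecs"
proof -
  have "e1 \<noteq> 0" by (metis e1_comp(1) zero_index zero_neq_one)
  thus ?thesis by (simp add: V0_def hform_def real_vecs_iff)
qed

lemma real_null_cases:
  assumes "x \<in> V0 \<inter> real_vecs"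
  shows "(x$1 \<noteq> 0 \<and> x = x$1 *s e1) \<or> (x$3 \<noteq> 0 \<and> x = x$3 *s Lr (Re (x$2) / (sqrt 2 * Re (x$3))))"
proof (cases "x$3 = 0")
  case True
  have h: "hform x x = 0" "x \<noteq> 0" using assms by (auto simp: V0_def)
  have "2 * Re (x$1 * cnj (x$3)) + (cmod (x$2))\<^sup>2 = 0" using h(1) unfolding hform_self
    by (metis of_real_eq_0_iff)
  hence "x$2 = 0" using True by simp
  hence "x = x$1 *s e1" using True by (simp add: vec3_eq_iff)
  moreover have "x$1 \<noteq> 0" using h(2) \<open>x$2 = 0\<close> True by (auto simp: vec3_eq_iff)
  ultimately show ?thesis by blast
next
  case False
  have h: "hform x x = 0" using assms by (auto simp: V0_def)
  have im: "Im (x$1) = 0" "Im (x$2) = 0" "Im (x$3) = 0" using assms by (auto simp: real_vecs_iff)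
  have x: "x = x$3 *s L (vproj x)" by (rule null_proj[OF h False])
  have "vproj x = (complex_of_real (Re (x$2) / (sqrt 2 * Re (x$3))), 0)"
    using im False unfolding vproj_def
    by (simp add: complex_eq_iff Im_divide Re_divide)
  thus ?thesis using x False by (simp add: Lr_def)
qed

lemma hform_e1_Lr: "hform e1 (Lr s) = 1" by (simp add: hform_def)
lemma hform_Lr_e1: "hform (Lr s) e1 = 1" by (simp add: hform_def)
lemma hform_Lr_Lr: "hform (Lr s) (Lr t) = - complex_of_real ((s - t)\<^sup>2)"
  by (simp add: hform_def power2_eq_square algebra_simps flip: of_real_mult)

lemma dK_nonneg: "dK p q \<ge> 0" by (simp add: dK_def koranyi_gauge_def)

lemma dK_frame:
  assumes "unitary21 C" "L p = \<alpha> *s (C *v x)" "L q = \<beta> *s (C *v y)"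
  shows "dK p q = sqrt (cmod \<alpha> * cmod \<beta> * cmod (hform x y))"
proof -
  have "(dK p q)\<^sup>2 = cmod (\<alpha> * cnj \<beta> * hform x y)"
    unfolding dK_sq assms(2,3) hform_smult1 hform_smult2 using assms(1)
    by (simp add: unitary21_def mult.assoc mult.left_commute)
  also have "\<dots> = cmod \<alpha> * cmod \<beta> * cmod (hform x y)" by (simp add: norm_mult)
  finally show ?thesis using dK_nonneg by (metis real_sqrt_unique)
qed




lemma cmod_hform_Lr: "cmod (hform (Lr s) (Lr t)) = (s - t)\<^sup>2"
  unfolding hform_Lr_Lr norm_minus_cancel norm_of_real by simp

lemma frame_eq:
  assumes C: "unitary21 C"
    and ha: "L a = \<alpha> *s (C *v e1)" and hb: "L b = \<beta> *s (C *v Lr sb)"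
    and hc: "L c = \<gamma> *s (C *v Lr sc)" and hd: "L d = \<delta> *s (C *v Lr sd)"
    and nz: "\<alpha> \<noteq> 0" "\<beta> \<noteq> 0" "\<gamma> \<noteq> 0" "\<delta> \<noteq> 0"
    and ds: "sb \<noteq> sc" "sb \<noteq> sd" "sc \<noteq> sd"
  shows "dK b c * dK a d = dK b d * dK a c + dK a b * dK c d \<longleftrightarrow> (sb < sd \<and> sd < sc) \<or> (sc < sd \<and> sd < sb)"
proof -
  define M where "M = cmod \<alpha> * cmod \<beta> * cmod \<gamma> * cmod \<delta>"
  have M0: "sqrt M > 0" using nz by (simp add: M_def)
  have bc: "dK b c = sqrt (cmod \<beta> * cmod \<gamma> * (sb - sc)\<^sup>2)" using dK_frame[OF C hb hc] cmod_hform_Lr by simp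
  have bd: "dK b d = sqrt (cmod \<beta> * cmod \<delta> * (sb - sd)\<^sup>2)" using dK_frame[OF C hb hd] cmod_hform_Lr by simp
  have cd: "dK c d = sqrt (cmod \<gamma> * cmod \<delta> * (sc - sd)\<^sup>2)" using dK_frame[OF C hc hd] cmod_hform_Lr by simp
  have ab: "dK a b = sqrt (cmod \<alpha> * cmod \<beta>)" using dK_frame[OF C ha hb] by (simp add: hform_e1_Lr)
  have ac: "dK a c = sqrt (cmod \<alpha> * cmod \<gamma>)" using dK_frame[OF C ha hc] by (simp add: hform_e1_Lr)
  have ad: "dK a d = sqrt (cmod \<alpha> * cmod \<delta>)" using dK_frame[OF C ha hd] by (simp add: hform_e1_Lr)
  have "dK b c * dK a d = sqrt (M * (sb - sc)\<^sup>2)" unfolding bc ad M_def real_sqrt_mult[symmetric]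
    by (simp add: mult_ac)
  hence 1: "dK b c * dK a d = sqrt M * \<bar>sb - sc\<bar>" by (simp add: real_sqrt_mult)
  have "dK b d * dK a c = sqrt (M * (sb - sd)\<^sup>2)" unfolding bd ac M_def real_sqrt_mult[symmetric]
    by (simp add: mult_ac)
  hence 2: "dK b d * dK a c = sqrt M * \<bar>sb - sd\<bar>" by (simp add: real_sqrt_mult)
  have "dK a b * dK c d = sqrt (M * (sc - sd)\<^sup>2)" unfolding ab cd M_def real_sqrt_mult[symmetric]
    by (simp add: mult_ac)
  hence 3: "dK a b * dK c d = sqrt M * \<bar>sc - sd\<bar>" by (simp add: real_sqrt_mult)
  have "dK b c * dK a d = dK b d * dK a c + dK a b * dK c d \<longleftrightarrow> \<bar>sb - sc\<bar> = \<bar>sb - sd\<bar> + \<bar>sc - sd\<bar>"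
    unfolding 1 2 3 using M0 by (simp add: distrib_left[symmetric])
  also have "\<dots> \<longleftrightarrow> (sb < sd \<and> sd < sc) \<or> (sc < sd \<and> sd < sb)" using ds by auto
  finally show ?thesis .
qed




lemma mv_smult: "C *v (c *s v) = c *s (C *v (v::complex^3))"
  by (simp add: vec_eq_iff matrix_vector_mult_def sum_distrib_left mult_ac)

lemma mv_comp: "(C *v x) $ i = C$i$1 * x$1 + C$i$2 * x$2 + C$i$3 * (x::complex^3)$3"
  by (simp add: matrix_vector_mult_def sum_3)

lemma bdry_C_inj:
  assumes "unitary21 C" "u \<in> V0" "v \<in> V0" "bdry (C *v u) = bdry (C *v v)"
  shows "\<exists>c. c \<noteq> 0 \<and> u = c *s v"
proof -
  obtain c where c: "c \<noteq> 0" "C *v u = c *s (C *v v)"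
    using bdry_inj[OF unitary_V0[OF assms(1,2)] unitary_V0[OF assms(1,3)] assms(4)] by blast
  hence "C *v u = C *v (c *s v)" by (simp add: mv_smult)
  hence "u = c *s v" using unitary_inj[OF assms(1)] by blast
  thus ?thesis using c by blast
qed

lemma Lr_not_e1: "Lr s \<noteq> c *s e1"
  by (metis Lr_comp(3) e1_comp(3) mult_zero_right smult_comp zero_neq_one)

lemma Lr_inj: "Lr s = c *s Lr t \<Longrightarrow> s = t"
  unfolding Lr_def by (drule lift_inj) simp

definition Rc :: "complex^3^3 \<Rightarrow> (complex \<times> complex) set" where
  "Rc C = (\<lambda>x. bdry (C *v x)) ` (V0 \<inter> real_vecs)"

locale frm =
  fixes C :: "complex^3^3" and a b c d :: heis and \<alpha> \<beta> \<gamma> \<delta> :: complex and sb sc sd :: real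
  assumes C: "unitary21 C"
    and ha: "L a = \<alpha> *s (C *v e1)" and hb: "L b = \<beta> *s (C *v Lr sb)"
    and hc: "L c = \<gamma> *s (C *v Lr sc)" and hd: "L d = \<delta> *s (C *v Lr sd)"
    and nz: "\<alpha> \<noteq> 0" "\<beta> \<noteq> 0" "\<gamma> \<noteq> 0" "\<delta> \<noteq> 0"
    and ds: "sb \<noteq> sc" "sb \<noteq> sd" "sc \<noteq> sd"
begin

lemma bd_a: "heis_bd a = bdry (C *v e1)"
  unfolding heis_bd_def ha using nz by (simp add: bdry_smult)
lemma bd_L: "L p = \<pi> *s (C *v Lr s) \<Longrightarrow> \<pi> \<noteq> 0 \<Longrightarrow> heis_bd p = bdry (C *v Lr s)"
  unfolding heis_bd_def by (simp add: bdry_smult)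
lemma bd_b: "heis_bd b = bdry (C *v Lr sb)" using bd_L[OF hb] nz by simp
lemma bd_c: "heis_bd c = bdry (C *v Lr sc)" using bd_L[OF hc] nz by simp
lemma bd_d: "heis_bd d = bdry (C *v Lr sd)" using bd_L[OF hd] nz by simp

lemma Lr_in_R: "bdry (C *v Lr s) \<in> Rc C" unfolding Rc_def using Lr_V0R by blast
lemma e1_in_R: "bdry (C *v e1) \<in> Rc C" unfolding Rc_def using e1_V0R by blast

lemma Lr_ne_a: "bdry (C *v Lr s) \<noteq> bdry (C *v e1)"
proof
  assume "bdry (C *v Lr s) = bdry (C *v e1)"
  then obtain k where "Lr s = k *s e1" using bdry_C_inj[OF C] Lr_V0R e1_V0R by blast
  thus False using Lr_not_e1 by blast
qed

lemma Lr_ne_Lr: "s \<noteq> t \<Longrightarrow> bdry (C *v Lr s) \<noteq> bdry (C *v Lr t)"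
  using bdry_C_inj[OF C] Lr_V0R Lr_inj by blast

lemma R_cases:
  assumes "y \<in> Rc C" "y \<noteq> bdry (C *v e1)"
  shows "\<exists>s. y = bdry (C *v Lr s)"
proof -
  obtain x where x: "x \<in> V0 \<inter> real_vecs" "y = bdry (C *v x)" using assms(1) by (auto simp: Rc_def)
  from real_null_cases[OF x(1)] show ?thesis
  proof
    assume "x$1 \<noteq> 0 \<and> x = x$1 *s e1"
    hence "y = bdry (C *v e1)" using x(2) by (metis bdry_smult mv_smult)
    thus ?thesis using assms(2) by blast
  next
    assume h: "x$3 \<noteq> 0 \<and> x = x$3 *s Lr (Re (x$2) / (sqrt 2 * Re (x$3)))"
    hence "y = bdry (C *v Lr (Re (x$2) / (sqrt 2 * Re (x$3))))" using x(2) by (metis bdry_smult mv_smult)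
    thus ?thesis by blast
  qed
qed

end




definition Hf :: "complex^3 \<Rightarrow> complex \<times> complex \<Rightarrow> complex" where
  "Hf V y = (fst y + 1) * cnj (V$3) + complex_of_real (sqrt 2) * snd y * cnj (V$2) + (fst y - 1) * cnj (V$1)"

lemma Hf_eq: "Hf V y = hform (gbd y) V" by (simp add: Hf_def hform_def gbd_def)

lemma continuous_Hf[continuous_intros]: "continuous_on S (Hf V)"
  unfolding Hf_def by (intro continuous_intros)

context frm begin

definition wd :: "complex^3" where "wd = vector [- complex_of_real (sqrt 2 * sd), 1, 0]"

definition ff :: "complex \<times> complex \<Rightarrow> real" where
  "ff y = Re (Hf (C *v wd) y / Hf (C *v e1) y)"

lemma Hf_vals:
  "Hf (C *v e1) (bdry (C *v Lr s)) \<noteq> 0 \<and> ff (bdry (C *v Lr s)) = sqrt 2 * (s - sd)"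
proof -
  define v where "v = C *v Lr s"
  have v0: "v \<in> V0" unfolding v_def using unitary_V0[OF C] Lr_V0R by blast
  define k where "k = 2 / (v$1 - v$3)"
  have k0: "k \<noteq> 0" using V0_13[OF v0] by (simp add: k_def)
  have g: "gbd (bdry v) = k *s v" using gbd_bdry[OF v0] by (simp add: k_def)
  have hE: "Hf (C *v e1) (bdry v) = k" unfolding Hf_eq g hform_smult1
    using C unfolding v_def by (simp add: unitary21_def hform_Lr_e1)
  have "hform (Lr s) wd = complex_of_real (sqrt 2 * (s - sd))"
    by (simp add: hform_def wd_def algebra_simps)
  hence hW: "Hf (C *v wd) (bdry v) = k * complex_of_real (sqrt 2 * (s - sd))" unfolding Hf_eq g hform_smult1
    using C unfolding v_def by (simp add: unitary21_def)
  show ?thesis using hE hW k0 unfolding ff_def v_def[symmetric] by simp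
qed

lemma ff_cont: "continuous_on (Rc C - {bdry (C *v e1)}) ff"
proof -
  have "\<forall>y \<in> Rc C - {bdry (C *v e1)}. Hf (C *v e1) y \<noteq> 0"
    using R_cases Hf_vals by blast
  thus ?thesis unfolding ff_def by (intro continuous_intros) auto
qed

lemma path_cont:
  "continuous_on {0..1} (\<lambda>t::real. bdry (C *v Lr (sb + t * (sc - sb))))"
proof -
  define v where "v = (\<lambda>t::real. C *v Lr (sb + t * (sc - sb)))"
  have vc: "\<And>i. continuous_on {0..1} (\<lambda>t. v t $ i)"
    unfolding v_def mv_comp Lr_comp by (intro continuous_intros)
  have nz: "\<forall>t\<in>{0..1}. v t $ 1 - v t $ 3 \<noteq> 0"
    using V0_13 unitary_V0[OF C] Lr_V0R unfolding v_def by fastforce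
  have "continuous_on {0..1} (\<lambda>t. ((v t $ 1 + v t $ 3) / (v t $ 1 - v t $ 3),
          complex_of_real (sqrt 2) * v t $ 2 / (v t $ 1 - v t $ 3)))"
    using nz by (intro continuous_intros vc) auto
  thus ?thesis unfolding v_def bdry_def .
qed

end




lemma seg_bounds:
  fixes t x y :: real
  assumes "0 \<le> t" "t \<le> 1"
  shows "min x y \<le> x + t * (y - x) \<and> x + t * (y - x) \<le> max x y"
proof (cases "x \<le> y")
  case True
  have "0 \<le> t * (y - x)" using assms True by simp
  moreover have "t * (y - x) \<le> 1 * (y - x)" using assms True by (intro mult_right_mono) auto
  ultimately show ?thesis using True by auto
next
  case False
  have "0 \<le> t * (x - y)" using assms False by simp
  moreover have "t * (x - y) \<le> 1 * (x - y)" using assms False by (intro mult_right_mono) auto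
  ultimately show ?thesis using False by (auto simp: algebra_simps)
qed

context frm begin

lemma sep_iff: "separates (Rc C) a d b c \<longleftrightarrow> (sb < sd \<and> sd < sc) \<or> (sc < sd \<and> sd < sb)"
proof -
  define S where "S = Rc C - {heis_bd a, heis_bd d}"
  have S: "S = Rc C - {bdry (C *v e1), bdry (C *v Lr sd)}" unfolding S_def bd_a bd_d ..
  have bS: "heis_bd b \<in> S" unfolding S bd_b using Lr_in_R Lr_ne_a Lr_ne_Lr ds by auto
  have cS: "heis_bd c \<in> S" unfolding S bd_c using Lr_in_R Lr_ne_a Lr_ne_Lr ds by auto
  have sep: "separates (Rc C) a d b c \<longleftrightarrow> heis_bd c \<notin> connected_component_set S (heis_bd b)"
    unfolding separates_def S_def[symmetric] using bS cS by simp
  show ?thesis unfolding sep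
  proof
    assume nc: "heis_bd c \<notin> connected_component_set S (heis_bd b)"
    show "(sb < sd \<and> sd < sc) \<or> (sc < sd \<and> sd < sb)"
    proof (rule ccontr)
      assume nb: "\<not> ((sb < sd \<and> sd < sc) \<or> (sc < sd \<and> sd < sb))"
      define \<gamma> where "\<gamma> = (\<lambda>t::real. bdry (C *v Lr (sb + t * (sc - sb))))"
      define T where "T = \<gamma> ` {0..1}"
      have Tc: "connected T" unfolding T_def \<gamma>_def using path_cont connected_continuous_image connected_Icc by blast
      have TS: "T \<subseteq> S"
      proof
        fix y assume "y \<in> T"
        then obtain t where t: "t \<in> {0..1}" "y = \<gamma> t" by (auto simp: T_def)
        have "sb + t * (sc - sb) \<noteq> sd"
        proof
          assume e: "sb + t * (sc - sb) = sd"
          have "min sb sc \<le> sd" "sd \<le> max sb sc" using seg_bounds[of t sb sc] t(1) e by auto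
          thus False using nb ds by (auto simp: min_def max_def split: if_splits)
        qed
        thus "y \<in> S" unfolding S t(2) \<gamma>_def using Lr_in_R Lr_ne_a Lr_ne_Lr by auto
      qed
      have bT: "heis_bd b \<in> T" unfolding T_def \<gamma>_def bd_b by (rule image_eqI[of _ _ 0]) auto
      have cT: "heis_bd c \<in> T" unfolding T_def \<gamma>_def bd_c by (rule image_eqI[of _ _ 1]) auto
      have "T \<subseteq> connected_component_set S (heis_bd b)"
        by (rule connected_component_maximal[OF bT Tc TS])
      thus False using cT nc by blast
    qed
  next
    assume btw: "(sb < sd \<and> sd < sc) \<or> (sc < sd \<and> sd < sb)"
    show "heis_bd c \<notin> connected_component_set S (heis_bd b)"
    proof
      assume cK: "heis_bd c \<in> connected_component_set S (heis_bd b)"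
      define K where "K = connected_component_set S (heis_bd b)"
      have KS: "K \<subseteq> S" unfolding K_def by (rule connected_component_subset)
      have bK: "heis_bd b \<in> K" unfolding K_def using bS by simp
      have cK': "heis_bd c \<in> K" using cK K_def by simp
      have cont: "continuous_on K ff"
        using ff_cont by (rule continuous_on_subset) (use KS S in auto)
      have con: "connected (ff ` K)" using connected_continuous_image[OF cont] K_def by simp
      have fb: "ff (heis_bd b) = sqrt 2 * (sb - sd)" unfolding bd_b using Hf_vals by simp
      have fc: "ff (heis_bd c) = sqrt 2 * (sc - sd)" unfolding bd_c using Hf_vals by simp
      have "0 \<in> ff ` K"
      proof (cases "sb < sd")
        case True
        hence "ff (heis_bd b) \<le> 0" "0 \<le> ff (heis_bd c)" using btw fb fc by (auto simp: mult_le_0_iff zero_le_mult_iff)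
        thus ?thesis using con bK cK' unfolding connected_iff_interval by blast
      next
        case False
        hence "ff (heis_bd c) \<le> 0" "0 \<le> ff (heis_bd b)" using btw fb fc by (auto simp: mult_le_0_iff zero_le_mult_iff)
        thus ?thesis using con bK cK' unfolding connected_iff_interval by blast
      qed
      then obtain y where y: "y \<in> K" "ff y = 0" by auto
      have yS: "y \<in> S" using y KS by auto
      then obtain s where s: "y = bdry (C *v Lr s)" using R_cases unfolding S by blast
      have "s \<noteq> sd" using yS unfolding S s by auto
      moreover have "ff y = sqrt 2 * (s - sd)" unfolding s using Hf_vals by simp
      ultimately show False using y(2) by simp
    qed
  qed
qed

end




lemma frm_on_Rcircle:
  assumes "frm C a b c d \<alpha> \<beta> \<gamma> \<delta> sb sc sd" "(sb < sd \<and> sd < sc) \<or> (sc < sd \<and> sd < sb)"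
  shows "on_Rcircle_sep a d b c"
proof -
  interpret frm C a b c d \<alpha> \<beta> \<gamma> \<delta> sb sc sd by fact
  have "is_Rcircle (Rc C)" unfolding is_Rcircle_def Rc_def using C by blast
  moreover have "heis_bd a \<in> Rc C" "heis_bd b \<in> Rc C" "heis_bd c \<in> Rc C" "heis_bd d \<in> Rc C"
    unfolding bd_a bd_b bd_c bd_d using e1_in_R Lr_in_R by auto
  moreover have "separates (Rc C) a d b c" using sep_iff assms(2) by simp
  ultimately show ?thesis unfolding on_Rcircle_sep_def by blast
qed

lemma pt_in_R:
  assumes "unitary21 C" "heis_bd p \<in> Rc C"
  shows "\<exists>x \<in> V0 \<inter> real_vecs. \<exists>\<mu>. \<mu> \<noteq> 0 \<and> L p = \<mu> *s (C *v x)"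
proof -
  obtain x where x: "x \<in> V0 \<inter> real_vecs" "heis_bd p = bdry (C *v x)" using assms(2) by (auto simp: Rc_def)
  have "\<exists>\<mu>. \<mu> \<noteq> 0 \<and> L p = \<mu> *s (C *v x)"
    using bdry_inj[OF lift_V0 unitary_V0[OF assms(1)]] x by (simp add: heis_bd_def)
  thus ?thesis using x by blast
qed

lemma prop_same:
  assumes "L p = \<mu> *s v" "L q = \<nu> *s v" "\<nu> \<noteq> 0"
  shows "p = q"
proof -
  have "L p = (\<mu> / \<nu>) *s L q" using assms by (simp add: vector_smult_assoc)
  thus ?thesis by (rule lift_inj)
qed

lemma pt_not_a:
  assumes "L a = \<alpha> *s (C *v e1)" "\<alpha> \<noteq> 0" "p \<noteq> a" "L p = \<mu> *s (C *v x)" "\<mu> \<noteq> 0" "x \<in> V0 \<inter> real_vecs"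
  shows "\<exists>s \<nu>. \<nu> \<noteq> 0 \<and> L p = \<nu> *s (C *v Lr s)"
  using real_null_cases[OF assms(6)]
proof
  assume h: "x$1 \<noteq> 0 \<and> x = x$1 *s e1"
  hence "L p = \<mu> *s (C *v (x$1 *s e1))" using assms(4) by simp
  hence "L p = (\<mu> * x$1) *s (C *v e1)" by (simp only: mv_smult vector_smult_assoc)
  hence "p = a" using prop_same assms(1,2) by blast
  thus ?thesis using assms(3) by blast
next
  assume h: "x$3 \<noteq> 0 \<and> x = x$3 *s Lr (Re (x$2) / (sqrt 2 * Re (x$3)))"
  hence "L p = \<mu> *s (C *v (x$3 *s Lr (Re (x$2) / (sqrt 2 * Re (x$3)))))" using assms(4) by simp
  hence "L p = (\<mu> * x$3) *s (C *v Lr (Re (x$2) / (sqrt 2 * Re (x$3))))" by (simp only: mv_smult vector_smult_assoc)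
  moreover have "\<mu> * x$3 \<noteq> 0" using h assms(5) by simp
  ultimately show ?thesis by blast
qed




lemma Tm_real: "x \<in> real_vecs \<Longrightarrow> Tm (complex_of_real s, 0) *v x \<in> real_vecs"
  by (simp add: real_vecs_iff Tm_def mat3_mv)

lemma Tm_real': "x \<in> real_vecs \<Longrightarrow> Tm (- complex_of_real s, 0) *v x \<in> real_vecs"
  using Tm_real[of x "-s"] by simp

lemma Jm_real: "x \<in> real_vecs \<Longrightarrow> Jm *v x \<in> real_vecs"
  by (simp add: real_vecs_iff Jm_def mat3_mv)

lemma Tm_Tm_inv: "Tm (complex_of_real s, 0) *v (Tm (complex_of_real (-s), 0) *v x) = x"
proof -
  have "complex_of_real (sqrt 2) * complex_of_real (sqrt 2) = 2" by (rule sqrt2_sq)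
  thus ?thesis by (simp add: Tm_def mat3_mv vec3_eq_iff algebra_simps power2_eq_square)
qed

lemma Rc_change:
  assumes "\<And>x. x \<in> V0 \<inter> real_vecs \<Longrightarrow> P *v x \<in> V0 \<inter> real_vecs"
    and "\<And>x. x \<in> V0 \<inter> real_vecs \<Longrightarrow> Q *v x \<in> V0 \<inter> real_vecs"
    and "\<And>x. P *v (Q *v x) = x"
  shows "Rc (A ** P) = Rc A"
proof
  show "Rc (A ** P) \<subseteq> Rc A"
    unfolding Rc_def using assms(1) by (auto simp: matrix_vector_mul_assoc[symmetric])
next
  show "Rc A \<subseteq> Rc (A ** P)"
  proof
    fix y assume "y \<in> Rc A"
    then obtain x where x: "x \<in> V0 \<inter> real_vecs" "y = bdry (A *v x)" by (auto simp: Rc_def)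
    have "y = bdry ((A ** P) *v (Q *v x))" using x(2) assms(3) by (simp add: matrix_vector_mul_assoc[symmetric])
    thus "y \<in> Rc (A ** P)" unfolding Rc_def using assms(2)[OF x(1)] by blast
  qed
qed

lemma frame_from_C:
  assumes C: "unitary21 C" and ha: "L a = \<alpha> *s (C *v e1)" "\<alpha> \<noteq> 0"
    and dist: "distinct [a, b, c, d]"
    and ins: "heis_bd b \<in> Rc C" "heis_bd c \<in> Rc C" "heis_bd d \<in> Rc C"
  shows "\<exists>\<beta> \<gamma> \<delta> sb sc sd. frm C a b c d \<alpha> \<beta> \<gamma> \<delta> sb sc sd"
proof -
  have get: "\<exists>s \<nu>. \<nu> \<noteq> 0 \<and> L p = \<nu> *s (C *v Lr s)" if hp: "heis_bd p \<in> Rc C" and pa: "p \<noteq> a" for p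
  proof -
    obtain x \<mu> where "x \<in> V0 \<inter> real_vecs" "\<mu> \<noteq> 0" "L p = \<mu> *s (C *v x)" using pt_in_R[OF C hp] by blast
    thus ?thesis using pt_not_a[OF ha(1,2) pa] by blast
  qed
  obtain sb \<beta> where b: "\<beta> \<noteq> 0" "L b = \<beta> *s (C *v Lr sb)" using get[OF ins(1)] dist by auto
  obtain sc \<gamma> where c: "\<gamma> \<noteq> 0" "L c = \<gamma> *s (C *v Lr sc)" using get[OF ins(2)] dist by auto
  obtain sd \<delta> where d: "\<delta> \<noteq> 0" "L d = \<delta> *s (C *v Lr sd)" using get[OF ins(3)] dist by auto
  have "sb \<noteq> sc" proof assume "sb = sc" thus False using prop_same[OF b(2), of c] c dist by auto qed
  moreover have "sb \<noteq> sd" proof assume "sb = sd" thus False using prop_same[OF b(2), of d] d dist by auto qed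
  moreover have "sc \<noteq> sd" proof assume "sc = sd" thus False using prop_same[OF c(2), of d] d dist by auto qed
  ultimately have "frm C a b c d \<alpha> \<beta> \<gamma> \<delta> sb sc sd"
    using C ha b c d by (unfold_locales) auto
  thus ?thesis by blast
qed

lemma circle_frame:
  assumes A: "unitary21 A" and dist: "distinct [a, b, c, d]"
    and ins: "heis_bd a \<in> Rc A" "heis_bd b \<in> Rc A" "heis_bd c \<in> Rc A" "heis_bd d \<in> Rc A"
  shows "\<exists>C \<alpha> \<beta> \<gamma> \<delta> sb sc sd. frm C a b c d \<alpha> \<beta> \<gamma> \<delta> sb sc sd \<and> Rc C = Rc A"
proof -
  obtain xa \<mu> where xa: "xa \<in> V0 \<inter> real_vecs" "\<mu> \<noteq> 0" "L a = \<mu> *s (A *v xa)" using pt_in_R[OF A ins(1)] by blast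
  have "\<exists>C \<alpha>. unitary21 C \<and> \<alpha> \<noteq> 0 \<and> L a = \<alpha> *s (C *v e1) \<and> Rc C = Rc A"
    using real_null_cases[OF xa(1)]
  proof
    assume h: "xa$1 \<noteq> 0 \<and> xa = xa$1 *s e1"
    hence "L a = \<mu> *s (A *v (xa$1 *s e1))" using xa(3) by simp
    hence "L a = (\<mu> * xa$1) *s (A *v e1)" by (simp only: mv_smult vector_smult_assoc)
    moreover have "\<mu> * xa$1 \<noteq> 0" using h xa(2) by simp
    ultimately show ?thesis using A by blast
  next
    define s0 where "s0 = Re (xa$2) / (sqrt 2 * Re (xa$3))"
    assume h: "xa$3 \<noteq> 0 \<and> xa = xa$3 *s Lr (Re (xa$2) / (sqrt 2 * Re (xa$3)))"
    hence h': "xa = xa$3 *s Lr s0" unfolding s0_def by simp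
    define P where "P = Tm (complex_of_real s0, 0) ** Jm"
    define Q where "Q = Jm ** Tm (complex_of_real (-s0), 0)"
    have uP: "unitary21 P" unfolding P_def by (intro unitary_mult unitary_Tm unitary_Jm)
    have uQ: "unitary21 Q" unfolding Q_def by (intro unitary_mult unitary_Tm unitary_Jm)
    have Pe: "P *v e1 = Lr s0"
      unfolding P_def matrix_vector_mul_assoc[symmetric] Jm_e1 Tm_lift Lr_def
      by (simp add: heis_mult_def)
    have Rc: "Rc (A ** P) = Rc A"
    proof (rule Rc_change)
      show "P *v x \<in> V0 \<inter> real_vecs" if "x \<in> V0 \<inter> real_vecs" for x
        using that unitary_V0[OF uP] unfolding P_def
        by (auto simp: matrix_vector_mul_assoc[symmetric] intro!: Tm_real Tm_real' Jm_real)
      show "Q *v x \<in> V0 \<inter> real_vecs" if "x \<in> V0 \<inter> real_vecs" for x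
        using that unitary_V0[OF uQ] unfolding Q_def
        by (auto simp: matrix_vector_mul_assoc[symmetric] intro!: Tm_real Tm_real' Jm_real)
      show "P *v (Q *v x) = x" for x
        unfolding P_def Q_def using Tm_Tm_inv[of s0] by (simp add: matrix_vector_mul_assoc[symmetric] Jm_Jm)
    qed
    have "L a = \<mu> *s (A *v (xa$3 *s (P *v e1)))" using xa(3) h' Pe by simp
    hence "L a = (\<mu> * xa$3) *s ((A ** P) *v e1)"
      by (simp only: mv_smult vector_smult_assoc matrix_vector_mul_assoc)
    moreover have "\<mu> * xa$3 \<noteq> 0" using h xa(2) by simp
    ultimately show ?thesis using Rc unitary_mult[OF A uP] by blast
  qed
  then obtain C \<alpha> where C: "unitary21 C" "\<alpha> \<noteq> 0" "L a = \<alpha> *s (C *v e1)" "Rc C = Rc A" by blast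
  obtain \<beta> \<gamma> \<delta> sb sc sd where "frm C a b c d \<alpha> \<beta> \<gamma> \<delta> sb sc sd"
    using frame_from_C[OF C(1) C(3) C(2) dist] ins C(4) by metis
  thus ?thesis using C(4) by blast
qed




lemma dK_sym: "dK p q = dK q p"
proof -
  have "(dK p q)\<^sup>2 = (dK q p)\<^sup>2" unfolding dK_sq by (metis complex_mod_cnj hform_cnj)
  thus ?thesis using dK_nonneg by (metis power2_eq_iff_nonneg)
qed

lemma dK_tri: "dK x z \<le> dK x y + dK y z"
  unfolding dK_def using gauge_tri[of "heis_mult (heis_inv x) y" "heis_mult (heis_inv y) z"]
  by (simp add: heis_chain)

lemma gauge_zero: "koranyi_gauge p = 0 \<Longrightarrow> p = (0, 0)"
proof -
  assume "koranyi_gauge p = 0"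
  hence "cmod (hA p) = 0" by (simp add: gauge_hA)
  hence "hA p = 0" by simp
  hence "Re (hA p) = 0" "Im (hA p) = 0" by simp_all
  hence "fst p = 0" "snd p = 0" by simp_all
  thus ?thesis by (simp add: prod_eq_iff)
qed

lemma dK_pos: "p \<noteq> q \<Longrightarrow> dK p q > 0"
proof -
  assume pq: "p \<noteq> q"
  have "dK p q \<noteq> 0"
  proof
    assume "dK p q = 0"
    hence "heis_mult (heis_inv p) q = (0, 0)" unfolding dK_def by (rule gauge_zero)
    hence "q = heis_mult p (0, 0)" by (metis heis_cancel2)
    hence "q = p" by (simp add: heis_mult_def)
    thus False using pq by simp
  qed
  thus ?thesis using dK_nonneg[of p q] by simp
qed

lemma inv_frame:
  assumes "p \<noteq> a"
  shows "\<exists>q \<kappa>. \<kappa> \<noteq> 0 \<and> cmod \<kappa> = (dK a p)\<^sup>2 \<and> Jm *v (Tm (heis_inv a) *v L p) = \<kappa> *s L q"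
proof -
  define p' where "p' = heis_mult (heis_inv a) p"
  define w where "w = Jm *v L p'"
  have w: "w = Jm *v (Tm (heis_inv a) *v L p)" unfolding w_def p'_def Tm_lift ..
  have w3: "w$3 = L p' $ 1" unfolding w_def by (simp add: Jm_def mat3_mv)
  have "cmod (w$3) = cmod (hA p')" unfolding w3 L_comp
    by (metis hA_def complex_cnj_complex_of_real complex_cnj_diff complex_cnj_i complex_cnj_mult complex_mod_cnj minus_diff_eq mult_minus_left norm_minus_cancel diff_conv_add_uminus add.commute)
  also have "\<dots> = (dK a p)\<^sup>2" by (simp add: dK_def gauge_hA p'_def)
  finally have cw: "cmod (w$3) = (dK a p)\<^sup>2" .
  have k0: "w$3 \<noteq> 0" using cw dK_pos[of a p] assms by auto
  have "w \<in> V0" unfolding w_def using unitary_V0[OF unitary_Jm lift_V0] .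
  hence "hform w w = 0" by (simp add: V0_def)
  hence "w = w$3 *s L (vproj w)" using null_proj k0 by blast
  thus ?thesis using k0 cw w by metis
qed




lemma dist_rel:
  assumes M: "unitary21 M" and hp: "M *v L p = \<kappa> *s L q" and hp': "M *v L p' = \<kappa>' *s L q'"
    and k: "cmod \<kappa> = X\<^sup>2" "cmod \<kappa>' = Y\<^sup>2" and XY: "X \<ge> 0" "Y \<ge> 0"
  shows "dK p p' = X * Y * dK q q'"
proof -
  have "(dK p p')\<^sup>2 = cmod (hform (M *v L p) (M *v L p'))" using M unfolding dK_sq unitary21_def by simp
  also have "\<dots> = cmod (\<kappa> * cnj \<kappa>' * hform (L q) (L q'))" unfolding hp hp' hform_smult1 hform_smult2
    by (simp add: mult_ac)
  also have "\<dots> = X\<^sup>2 * Y\<^sup>2 * (dK q q')\<^sup>2" unfolding dK_sq by (simp add: norm_mult k)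
  also have "\<dots> = (X * Y * dK q q')\<^sup>2" by (simp add: power_mult_distrib)
  finally show ?thesis using XY dK_nonneg by (metis power2_eq_iff_nonneg mult_nonneg_nonneg)
qed

lemma back_lift:
  assumes "Jm *v (Tm (heis_inv a) *v L p) = \<kappa> *s L q"
  shows "L p = \<kappa> *s (Tm a *v (Jm *v L q))"
proof -
  have "Tm (heis_inv a) *v L p = Jm *v (Jm *v (Tm (heis_inv a) *v L p))" by (simp add: Jm_Jm)
  also have "\<dots> = \<kappa> *s (Jm *v L q)" unfolding assms by (simp add: mv_smult)
  finally have e: "Tm (heis_inv a) *v L p = \<kappa> *s (Jm *v L q)" .
  have "L p = Tm a *v (Tm (heis_inv a) *v L p)" by (simp add: Tm_lift heis_cancel2)
  also have "\<dots> = \<kappa> *s (Tm a *v (Jm *v L q))" unfolding e by (simp add: mv_smult)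
  finally show ?thesis .
qed




lemma main_lemma:
  assumes dist: "distinct [a, b, c, d]"
  shows "dK b c * dK a d \<le> dK b d * dK a c + dK a b * dK c d \<and>
    (dK b c * dK a d = dK b d * dK a c + dK a b * dK c d \<longleftrightarrow> on_Rcircle_sep a d b c)"
proof -
  define M where "M = Jm ** Tm (heis_inv a)"
  have uM: "unitary21 M" unfolding M_def by (intro unitary_mult unitary_Jm unitary_Tm)
  have Mv: "M *v v = Jm *v (Tm (heis_inv a) *v v)" for v unfolding M_def by (simp add: matrix_vector_mul_assoc)
  obtain qb kb where b: "kb \<noteq> 0" "cmod kb = (dK a b)\<^sup>2" "Jm *v (Tm (heis_inv a) *v L b) = kb *s L qb"
    using inv_frame[of b a] dist by auto
  obtain qc kc where c: "kc \<noteq> 0" "cmod kc = (dK a c)\<^sup>2" "Jm *v (Tm (heis_inv a) *v L c) = kc *s L qc"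
    using inv_frame[of c a] dist by auto
  obtain qd kd where d: "kd \<noteq> 0" "cmod kd = (dK a d)\<^sup>2" "Jm *v (Tm (heis_inv a) *v L d) = kd *s L qd"
    using inv_frame[of d a] dist by auto
  have Xb: "dK a b > 0" and Xc: "dK a c > 0" and Xd: "dK a d > 0" using dist dK_pos by auto
  have bc: "dK b c = dK a b * dK a c * dK qb qc"
    by (rule dist_rel[OF uM]) (use b c Mv dK_nonneg in auto)
  have bd: "dK b d = dK a b * dK a d * dK qb qd"
    by (rule dist_rel[OF uM]) (use b d Mv dK_nonneg in auto)
  have cd: "dK c d = dK a c * dK a d * dK qc qd"
    by (rule dist_rel[OF uM]) (use c d Mv dK_nonneg in auto)
  define X where "X = dK a b * dK a c * dK a d"
  have X0: "X > 0" using Xb Xc Xd by (simp add: X_def)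
  have e1: "dK b c * dK a d = X * dK qb qc" unfolding bc X_def by (simp add: mult_ac)
  have e2: "dK b d * dK a c + dK a b * dK c d = X * (dK qb qd + dK qd qc)"
    unfolding bd cd X_def by (simp add: dK_sym[of qd qc] algebra_simps)
  have tri: "dK qb qc \<le> dK qb qd + dK qd qc" by (rule dK_tri)
  have ineq: "dK b c * dK a d \<le> dK b d * dK a c + dK a b * dK c d"
    unfolding e1 e2 using tri X0 by simp
  have eqv: "dK b c * dK a d = dK b d * dK a c + dK a b * dK c d \<longleftrightarrow> dK qb qc = dK qb qd + dK qd qc"
    unfolding e1 e2 using X0 by simp
  have forward: "on_Rcircle_sep a d b c" if E: "dK qb qc = dK qb qd + dK qd qc"
  proof -
    define P where "P = heis_mult (heis_inv qb) qd"
    define Q where "Q = heis_mult (heis_inv qd) qc"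
    have PQ: "heis_mult P Q = heis_mult (heis_inv qb) qc" unfolding P_def Q_def by (rule heis_chain)
    have gP: "koranyi_gauge P > 0"
    proof -
      have "dK b d > 0" using dist dK_pos by auto
      hence "dK qb qd > 0" using bd Xb Xd dK_nonneg[of qb qd] by (auto simp: zero_less_mult_iff)
      thus ?thesis by (simp add: P_def dK_def)
    qed
    have gQ: "koranyi_gauge Q > 0"
    proof -
      have "dK c d > 0" using dist dK_pos by auto
      hence "dK qc qd > 0" using cd Xc Xd dK_nonneg[of qc qd] by (auto simp: zero_less_mult_iff)
      hence "dK qd qc > 0" using dK_sym[of qc qd] by simp
      thus ?thesis by (simp add: Q_def dK_def)
    qed
    have gE: "koranyi_gauge (heis_mult P Q) = koranyi_gauge P + koranyi_gauge Q"
      using E unfolding PQ by (simp add: P_def Q_def dK_def)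
    obtain l where tq: "snd P = 0" "snd Q = 0" "fst P \<noteq> 0" "l > 0" "fst Q = complex_of_real l * fst P"
      using gauge_tri_eq[OF gP gQ gE] by blast
    define z0 where "z0 = fst P"
    define r0 where "r0 = cmod z0"
    have r0: "r0 > 0" using tq(3) by (simp add: r0_def z0_def)
    define u where "u = z0 / complex_of_real r0"
    have u1: "cmod u = 1" using r0 by (simp add: u_def norm_divide r0_def)
    have uz: "u * complex_of_real r0 = z0" using r0 by (simp add: u_def)
    define B where "B = Tm a ** Jm ** Tm qb ** Rm u"
    have uB: "unitary21 B" unfolding B_def by (intro unitary_mult unitary_Jm unitary_Tm unitary_Rm u1)
    have Bv: "B *v v = Tm a *v (Jm *v (Tm qb *v (Rm u *v v)))" for v
      unfolding B_def by (simp add: matrix_vector_mul_assoc[symmetric])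
    have Be1: "L a = 1 *s (B *v e1)"
      unfolding Bv Rm_e1 Tm_e1 Jm_e1 Tm_lift by (simp add: heis_mult_def)
    have BLr: "B *v Lr s = Tm a *v (Jm *v L (heis_mult qb (u * complex_of_real s, 0)))" for s
      unfolding Bv Lr_def Rm_lift[OF u1] Tm_lift by simp
    have sb: "L b = kb *s (B *v Lr 0)"
    proof -
      have "heis_mult qb (u * complex_of_real 0, 0) = qb" by (simp add: heis_mult_def)
      thus ?thesis unfolding BLr using back_lift[OF b(3)] by simp
    qed
    have sd: "L d = kd *s (B *v Lr r0)"
    proof -
      have "(u * complex_of_real r0, 0) = P" unfolding uz z0_def using tq(1) by (simp add: prod_eq_iff)
      hence "heis_mult qb (u * complex_of_real r0, 0) = qd" unfolding P_def by (simp add: heis_cancel2)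
      thus ?thesis unfolding BLr using back_lift[OF d(3)] by simp
    qed
    have sc: "L c = kc *s (B *v Lr (r0 * (1 + l)))"
    proof -
      have "u * complex_of_real (r0 * (1 + l)) = (1 + complex_of_real l) * z0"
      proof -
        have "u * complex_of_real (r0 * (1 + l)) = (u * complex_of_real r0) * (1 + complex_of_real l)"
          by (simp add: algebra_simps)
        thus ?thesis using uz by (simp add: mult.commute)
      qed
      moreover have "heis_mult P Q = ((1 + complex_of_real l) * z0, 0)"
        using tq unfolding z0_def by (simp add: heis_mult_def prod_eq_iff algebra_simps)
      ultimately have "(u * complex_of_real (r0 * (1 + l)), 0) = heis_mult P Q" by simp
      hence "heis_mult qb (u * complex_of_real (r0 * (1 + l)), 0) = qc" unfolding PQ by (simp add: heis_cancel2)
      thus ?thesis unfolding BLr using back_lift[OF c(3)] by simp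
    qed
    have r1: "r0 < r0 * (1 + l)" using r0 tq(4) by simp
    have "frm B a b c d 1 kb kc kd 0 (r0 * (1 + l)) r0"
      using uB Be1 sb sc sd b(1) c(1) d(1) r0 r1 by unfold_locales auto
    thus ?thesis by (rule frm_on_Rcircle) (use r0 r1 in auto)
  qed
  have backward: "dK b c * dK a d = dK b d * dK a c + dK a b * dK c d" if S: "on_Rcircle_sep a d b c"
  proof -
    obtain R where R: "is_Rcircle R" "heis_bd a \<in> R" "heis_bd b \<in> R" "heis_bd c \<in> R" "heis_bd d \<in> R"
      "separates R a d b c" using S unfolding on_Rcircle_sep_def by blast
    obtain A where A: "unitary21 A" "R = Rc A" using R(1) unfolding is_Rcircle_def Rc_def by blast
    obtain C al be ga de sb sc sd where F: "frm C a b c d al be ga de sb sc sd" "Rc C = Rc A"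
      using circle_frame[OF A(1) dist] R A(2) by blast
    interpret frm C a b c d al be ga de sb sc sd by (rule F(1))
    have "separates (Rc C) a d b c" using R(6) A(2) F(2) by simp
    hence btw: "(sb < sd \<and> sd < sc) \<or> (sc < sd \<and> sd < sb)" using sep_iff by simp
    show ?thesis using frame_eq[OF C ha hb hc hd nz ds] btw by simp
  qed
  show ?thesis using ineq eqv forward backward by blast
qed



theorem theorem3p2:
  fixes p1 p2 p3 p4 :: heis
  assumes "distinct [p1, p2, p3, p4]"
  shows "dK p2 p3 * dK p1 p4 \<le> dK p2 p4 * dK p1 p3 + dK p1 p2 * dK p3 p4
       \<and> dK p1 p3 * dK p2 p4 \<le> dK p1 p2 * dK p3 p4 + dK p2 p3 * dK p1 p4
       \<and> dK p1 p2 * dK p3 p4 \<le> dK p1 p3 * dK p2 p4 + dK p2 p3 * dK p1 p4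
       \<and> (dK p2 p3 * dK p1 p4 = dK p2 p4 * dK p1 p3 + dK p1 p2 * dK p3 p4
           \<longleftrightarrow> on_Rcircle_sep p1 p4 p2 p3)
       \<and> (dK p1 p3 * dK p2 p4 = dK p1 p2 * dK p3 p4 + dK p2 p3 * dK p1 p4
           \<longleftrightarrow> on_Rcircle_sep p1 p3 p2 p4)
       \<and> (dK p1 p2 * dK p3 p4 = dK p1 p3 * dK p2 p4 + dK p2 p3 * dK p1 p4
           \<longleftrightarrow> on_Rcircle_sep p1 p2 p3 p4)"
  proof -
  have d1: "distinct [p1, p2, p3, p4]" using assms .
  have d2: "distinct [p1, p2, p4, p3]" using assms by auto
  have d3: "distinct [p1, p3, p4, p2]" using assms by auto
  note m1 = main_lemma[OF d1] and m2 = main_lemma[OF d2] and m3 = main_lemma[OF d3]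
  have s: "dK p4 p3 = dK p3 p4" "dK p3 p2 = dK p2 p3" "dK p4 p2 = dK p2 p4" by (simp_all add: dK_sym)
  show ?thesis using m1 m2 m3 unfolding s by (simp add: mult.commute add.commute)
qed

end
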